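(* Let $X$ be a finite alphabet, $c\geq1$, $x,y\in X$ letters and $w\in X^c$. Then the sequence $(x,y,w)$ is a code if and only if $x\neq y$ and $w\notin\{x,y\}^c$ (i.e. $w$ contains at least one letter different from both $x$ and $y$).
   Context: $X^*$ is the set of words over the finite alphabet $X$, and $\{x,y\}^c$ is the set of words of length $c$ all of whose letters lie in $\{x,y\}$. A code over $X$ is a finite sequence $C=(v_1,\ldots,v_m)$ of words over $X$ such that every $w\in X^*$ has at most one factorization into code-words: if $w=v_{i_1}\cdots v_{i_l}=v_{j_1}\cdots v_{j_{l'}}$ with $l,l'\geq1$, then $l=l'$ and $i_t=j_t$ for all $t$. (Codes are sequences, not sets.) *)

theory Defs
  imports Main
begin

definition is_code :: "'a list list \<Rightarrow> bool" where
  "is_code C \<longleftrightarrow>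
     (\<forall>is js. is \<noteq> [] \<longrightarrow> js \<noteq> [] \<longrightarrow>
        set is \<subseteq> {..<length C} \<longrightarrow> set js \<subseteq> {..<length C} \<longrightarrow>
        concat (map (\<lambda>i. C ! i) is) = concat (map (\<lambda>i. C ! i) js) \<longrightarrow> is = js)"

definition words_of_length :: "'a set \<Rightarrow> nat \<Rightarrow> 'a list set" where
  "words_of_length A c = {v. length v = c \<and> set v \<subseteq> A}"

end

theory Submission
  imports Defs
begin

lemma tw_app: "\<forall>a\<in>set u. P a \<Longrightarrow> takeWhile P (u @ v) = u @ takeWhile P v"
  by (induction u) auto

lemma concat01:
  assumes "set a \<subseteq> {0,1::nat}"
  shows "concat (map (\<lambda>i. [[x],[y],w] ! i) a) = map (\<lambda>i. if i = 0 then x else y) a"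
  using assms by (induction a) auto

lemma map01_inj:
  assumes "x \<noteq> y" "set a1 \<subseteq> {0,1::nat}" "set a2 \<subseteq> {0,1}"
    "map (\<lambda>i. if i = 0 then x else y) a1 = map (\<lambda>i. if i = 0 then x else y) a2"
  shows "a1 = a2"
proof -
  have "inj_on (\<lambda>i. if i = 0 then x else y) {0,1::nat}"
    using assms(1) by (auto simp: inj_on_def)
  then show ?thesis using assms
    by (metis inj_on_map_eq_map inj_on_subset le_sup_iff set_append)
qed

lemma concat_nonempty:
  assumes "w \<noteq> []" "t \<noteq> []" "set t \<subseteq> {..<3::nat}"
  shows "concat (map (\<lambda>i. [[x],[y],w] ! i) t) \<noteq> []"
proof -
  obtain h r where t: "t = h # r" using assms(2) by (cases t) auto
  have "h < 3" using assms(3) t by auto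
  then have "[[x],[y],w] ! h \<noteq> []" using assms(1)
    by (auto simp: less_Suc_eq nth_Cons')
  then show ?thesis using t by simp
qed

lemma main_uniq:
  assumes xy: "x \<noteq> y" and z: "z \<in> set w" "z \<notin> {x,y}"
  shows "\<forall>js. set is \<subseteq> {..<3::nat} \<longrightarrow> set js \<subseteq> {..<3} \<longrightarrow>
     concat (map (\<lambda>i. [[x],[y],w] ! i) is) = concat (map (\<lambda>i. [[x],[y],w] ! i) js) \<longrightarrow> is = js"
proof (induction "length is" arbitrary: "is" rule: less_induct)
  case less
  let ?C = "\<lambda>i. [[x],[y],w] ! i"
  let ?g = "\<lambda>i::nat. if i = 0 then x else y"
  let ?P = "\<lambda>a. a \<in> {x,y}"
  have wne: "w \<noteq> []" using z by auto
  have twW: "\<And>R. takeWhile ?P (w @ R) = takeWhile ?P w"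
    using z by (induction w) auto
  have nP: "\<not> (\<forall>a\<in>set w. a \<in> {x,y})" using z by auto
  show ?case
  proof (intro allI impI)
    fix js assume s1: "set is \<subseteq> {..<3}" and s2: "set js \<subseteq> {..<3}"
      and eq: "concat (map ?C is) = concat (map ?C js)"
    define a1 where "a1 = takeWhile (\<lambda>i. i \<noteq> 2) is"
    define b1 where "b1 = dropWhile (\<lambda>i. i \<noteq> 2) is"
    define a2 where "a2 = takeWhile (\<lambda>i. i \<noteq> 2) js"
    define b2 where "b2 = dropWhile (\<lambda>i. i \<noteq> 2) js"
    have i1: "is = a1 @ b1" and i2: "js = a2 @ b2" unfolding a1_def b1_def a2_def b2_def by auto
    have sa1: "set a1 \<subseteq> {0,1}" using s1 unfolding a1_def
      by (auto dest!: set_takeWhileD)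
    have sa2: "set a2 \<subseteq> {0,1}" using s2 unfolding a2_def
      by (auto dest!: set_takeWhileD)
    have hb1: "b1 = [] \<or> (\<exists>t. b1 = 2 # t)" unfolding b1_def
      by (metis (mono_tags, lifting) dropWhile_eq_Cons_conv neq_Nil_conv)
    have hb2: "b2 = [] \<or> (\<exists>t. b2 = 2 # t)" unfolding b2_def
      by (metis (mono_tags, lifting) dropWhile_eq_Cons_conv neq_Nil_conv)
    have u1: "concat (map ?C a1) = map ?g a1" using concat01[OF sa1, of x y w] by simp
    have u2: "concat (map ?C a2) = map ?g a2" using concat01[OF sa2, of x y w] by simp
    have P1: "\<forall>a\<in>set (map ?g a1). ?P a" by auto
    have P2: "\<forall>a\<in>set (map ?g a2). ?P a" by auto
    have E: "map ?g a1 @ concat (map ?C b1) = map ?g a2 @ concat (map ?C b2)"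
      using eq i1 i2 u1 u2 by simp
    show "is = js"
    proof (cases "b1 = []")
      case True note T1 = True
      show ?thesis
      proof (cases "b2 = []")
        case True
        then show ?thesis using T1 E i1 i2 map01_inj[OF xy sa1 sa2] by simp
      next
        case False
        then obtain t where "b2 = 2 # t" using hb2 by auto
        then have "z \<in> set (map ?g a1)" using E T1 z by auto
        then show ?thesis using z by auto
      qed
    next
      case False
      then obtain t1 where b1: "b1 = 2 # t1" using hb1 by auto
      show ?thesis
      proof (cases "b2 = []")
        case True
        then have "map ?g a2 = map ?g a1 @ w @ concat (map ?C t1)" using E b1 by simp
        then have "z \<in> set (map ?g a2)" using z(1) by (simp only: set_append) blast
        then show ?thesis using z by auto
      next
        case False
        then obtain t2 where b2: "b2 = 2 # t2" using hb2 by auto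
        have E2: "map ?g a1 @ w @ concat (map ?C t1) = map ?g a2 @ w @ concat (map ?C t2)"
          using E b1 b2 by simp
        have "takeWhile ?P (map ?g a1 @ w @ concat (map ?C t1))
            = takeWhile ?P (map ?g a2 @ w @ concat (map ?C t2))" using E2 by simp
        then have "map ?g a1 @ takeWhile ?P w = map ?g a2 @ takeWhile ?P w"
          by (simp only: tw_app[OF P1] tw_app[OF P2] twW)
        then have ga: "map ?g a1 = map ?g a2" by simp
        then have aa: "a1 = a2" using map01_inj[OF xy sa1 sa2] by simp
        have tt: "concat (map ?C t1) = concat (map ?C t2)" using E2 ga by simp
        have "length t1 < length is" using i1 b1 by simp
        moreover have "set t1 \<subseteq> {..<3}" "set t2 \<subseteq> {..<3}" using s1 s2 i1 i2 b1 b2 by auto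
        ultimately have "t1 = t2" using less tt by blast
        then show ?thesis using i1 i2 aa b1 b2 by simp
      qed
    qed
  qed
qed

theorem mainTheorem7:
  fixes X :: "'a set" and c :: nat and x y :: 'a and w :: "'a list"
  assumes "finite X" and "c \<ge> 1" and "x \<in> X" and "y \<in> X"
    and "w \<in> words_of_length X c"
  shows "is_code [[x], [y], w] \<longleftrightarrow> x \<noteq> y \<and> w \<notin> words_of_length {x, y} c"
proof
  assume code: "is_code [[x], [y], w]"
  show "x \<noteq> y \<and> w \<notin> words_of_length {x, y} c"
  proof (intro conjI notI)
    assume "x = y"
    then have "concat (map (\<lambda>i. [[x],[y],w] ! i) [0::nat]) = concat (map (\<lambda>i. [[x],[y],w] ! i) [1])" by simp
    moreover have "set [0::nat] \<subseteq> {..<length [[x],[y],w]}" "set [1::nat] \<subseteq> {..<length [[x],[y],w]}" by auto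
    ultimately have "[0::nat] = [1]" using code unfolding is_code_def by blast
    then show False by simp
  next
    assume wx: "w \<in> words_of_length {x, y} c"
    define js where "js = map (\<lambda>a. if a = x then 0 else 1::nat) w"
    have sw: "set w \<subseteq> {x,y}" and lw: "length w = c" using wx by (auto simp: words_of_length_def)
    have cj: "concat (map (\<lambda>i. [[x],[y],w] ! i) js) = w"
    proof -
      have "\<And>v. set v \<subseteq> {x,y} \<Longrightarrow> concat (map (\<lambda>i. [[x],[y],w] ! i) (map (\<lambda>a. if a = x then 0 else 1::nat) v)) = v"
        subgoal for v by (induction v) auto
        done
      then show ?thesis unfolding js_def using sw by blast
    qed
    have "js \<noteq> []" using lw assms(2) js_def by auto
    moreover have "set js \<subseteq> {..<length [[x],[y],w]}" unfolding js_def by auto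
    moreover have "[2] \<noteq> js" unfolding js_def by (auto split: if_splits)
    moreover have "[2::nat] \<noteq> []" "set [2::nat] \<subseteq> {..<length [[x],[y],w]}" by auto
    moreover have "concat (map (\<lambda>i. [[x],[y],w] ! i) [2::nat]) = w" by simp
    ultimately show False using code cj unfolding is_code_def by metis
  qed
next
  assume h: "x \<noteq> y \<and> w \<notin> words_of_length {x, y} c"
  have lw: "length w = c" using assms(5) by (auto simp: words_of_length_def)
  then obtain z where z: "z \<in> set w" "z \<notin> {x,y}" using h by (auto simp: words_of_length_def)
  show "is_code [[x], [y], w]" unfolding is_code_def
    using main_uniq[OF conjunct1[OF h] z] by (simp add: numeral_3_eq_3)
qed

end
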